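(* In the setting described in the context, suppose $p_j(\theta)>0$ for all $j$ and all $\theta$. Then $H(\theta)=C_\Upsilon(\theta)$ holds if and only if the channel is quasi-classical, i.e. the eigenvectors $|w_k\rangle$ of the output state do not depend on $\theta$.
   Context: A one-parameter quantum channel is a map $\rho_0\mapsto\sum_k E_k(\theta)\rho_0E_k(\theta)^\dagger$ on density matrices on $\mathbb{C}^d$, with Kraus operators depending differentiably on real $\theta$ and $\sum_k E_k^\dagger E_k=I$. The input is a fixed pure state $\rho_0=|\psi_0\rangle\langle\psi_0|$. Canonical Kraus operators $\{\Upsilon_k(\theta)\}_{k=1}^d$: a differentiable Kraus representation of the same channel with $\mathrm{tr}\{\Upsilon_k\rho_0\Upsilon_j^\dagger\}=\delta_{jk}p_k(\theta)$. The output state is $\rho_{out}(\theta)=\sum_k p_k(\theta)|w_k(\theta)\rangle\langle w_k(\theta)|$ with $|w_k\rangle=p_k^{-1/2}\Upsilon_k|\psi_0\rangle$ an orthonormal basis depending differentiably on $\theta$. A prime denotes $d/d\theta$. $C_\Upsilon(\theta)=4\sum_k\mathrm{tr}\{\Upsilon_k'\rho_0\Upsilon_k'^\dagger\}$, and $H(\theta)=\mathrm{tr}\{\rho_{out}\lambda^2\}$ is the SLD quantum information, $\lambda$ a self-adjoint solution of $\rho_{out}'=\frac12(\rho_{out}\lambda+\lambda\rho_{out})$. *)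

theory Defs
  imports "HOL-Analysis.Analysis"
begin

text \<open>Complex d x d matrices are rendered as complex^'n^'n with a finite index type 'n
  (d = CARD('n)); vectors in C^d as complex^'n.\<close>

definition cadj :: "complex^'n^'m \<Rightarrow> complex^'m^'n" where
  "cadj A = (\<chi> i j. cnj (A $ j $ i))"

definition hermitian :: "complex^'n^'n \<Rightarrow> bool" where
  "hermitian A \<longleftrightarrow> cadj A = A"

definition outer :: "complex^'n \<Rightarrow> complex^'n \<Rightarrow> complex^'n^'n" where
  "outer x y = (\<chi> i j. x $ i * cnj (y $ j))"

definition channel_out :: "('k::finite \<Rightarrow> complex^'n^'n) \<Rightarrow> complex^'n^'n \<Rightarrow> complex^'n^'n" where
  "channel_out E rho = (\<Sum>k\<in>UNIV. E k ** rho ** cadj (E k))"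

definition rho_out :: "('k::finite \<Rightarrow> real \<Rightarrow> complex^'n^'n) \<Rightarrow> complex^'n \<Rightarrow> real \<Rightarrow> complex^'n^'n" where
  "rho_out U psi0 \<theta> = channel_out (\<lambda>k. U k \<theta>) (outer psi0 psi0)"

definition wvec :: "('k \<Rightarrow> real \<Rightarrow> complex^'n^'n) \<Rightarrow> ('k \<Rightarrow> real \<Rightarrow> real) \<Rightarrow> complex^'n \<Rightarrow> 'k \<Rightarrow> real \<Rightarrow> complex^'n" where
  "wvec U p psi0 k \<theta> = (1 / sqrt (p k \<theta>)) *\<^sub>R (U k \<theta> *v psi0)"

definition C_Ups :: "('k::finite \<Rightarrow> real \<Rightarrow> complex^'n^'n) \<Rightarrow> complex^'n \<Rightarrow> real \<Rightarrow> complex" where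
  "C_Ups U' psi0 \<theta> = 4 * (\<Sum>k\<in>UNIV. trace (U' k \<theta> ** outer psi0 psi0 ** cadj (U' k \<theta>)))"

end

theory Submission
  imports Defs
begin


definition diagm :: "('n \<Rightarrow> complex) \<Rightarrow> complex^'n^'n" where
  "diagm d = (\<chi> i j. if i = j then d i else 0)"

lemma mm_nth: "(A ** B) $ i $ j = (\<Sum>k\<in>UNIV. A $ i $ k * B $ k $ j)"
  by (simp add: matrix_matrix_mult_def)

lemma cadj_nth[simp]: "cadj A $ i $ j = cnj (A $ j $ i)"
  by (simp add: cadj_def)

lemma cadj_mult: "cadj (A ** B) = cadj B ** (cadj A :: complex^'n^'m)"
  by (simp add: vec_eq_iff mm_nth mult.commute)

lemma cadj_cadj[simp]: "cadj (cadj A) = A"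
  by (simp add: vec_eq_iff)

lemma cadj_add: "cadj (A + B) = cadj A + cadj B"
  by (simp add: vec_eq_iff)

lemma cadj_scaleR: "cadj (c *\<^sub>R A) = c *\<^sub>R cadj A"
  by (simp add: vec_eq_iff)

lemma diagm_right: "(M ** diagm d) $ i $ j = M $ i $ j * d j"
  by (simp add: mm_nth diagm_def if_distrib cong: if_cong)

lemma diagm_left: "(diagm d ** M) $ i $ j = d i * M $ i $ j"
proof -
  have "(diagm d ** M) $ i $ j = (\<Sum>k\<in>UNIV. if k = i then d i * M $ i $ j else 0)"
    unfolding mm_nth diagm_def by (rule sum.cong) auto
  then show ?thesis by simp
qed

lemma trace_mm: "trace (A ** B) = (\<Sum>j\<in>UNIV. \<Sum>k\<in>UNIV. A $ j $ k * B $ k $ j)"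
  by (simp add: trace_def mm_nth)

lemma outer_left: "A ** outer x y = outer (A *v x) y"
  by (simp add: vec_eq_iff mm_nth outer_def matrix_vector_mult_def sum_distrib_right mult.assoc)

lemma outer_right: "outer x y ** cadj B = outer x (B *v y)"
  by (simp add: vec_eq_iff mm_nth outer_def matrix_vector_mult_def sum_distrib_left mult_ac)

lemma trace_outer: "trace (outer x x) = (\<Sum>i\<in>UNIV. x $ i * cnj (x $ i))"
  by (simp add: trace_def outer_def)



lemma scal_off:
  fixes a m :: complex and pj pk :: real
  assumes pj: "pj > 0" and pk: "pk > 0"
    and h: "a * of_real pk + of_real pj * (- a) = (1/2) *\<^sub>R (of_real pj * m + m * of_real pk)"
  shows "cmod m ^ 2 \<le> 4 * cmod a ^ 2 \<and> (cmod m ^ 2 = 4 * cmod a ^ 2 \<longleftrightarrow> a = 0)"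
proof -
  define r where "r = (pk - pj) / (pk + pj)"
  have m: "m = a * of_real (2 * r)"
  proof -
    have h2: "2 * (a * of_real pk + of_real pj * (- a)) = 2 * ((1/2) *\<^sub>R (of_real pj * m + m * of_real pk))"
      using h by simp
    have e: "of_real (pk + pj) * m = a * of_real (2 * (pk - pj))"
      using h2 unfolding scaleR_conv_of_real by (simp add: algebra_simps)
    have nz: "(of_real (pk + pj) :: complex) \<noteq> 0" using pj pk by (simp only: of_real_eq_0_iff)
    have "m = a * of_real (2 * (pk - pj)) / of_real (pk + pj)"
      using e nz by (simp add: eq_divide_eq mult.commute)
    also have "\<dots> = a * of_real (2 * r)"
      using nz by (simp add: r_def)
    finally show ?thesis .
  qed
  have r1: "r^2 < 1"
  proof -
    have "\<bar>pk - pj\<bar> < pk + pj" using pj pk by linarith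
    then have "\<bar>r\<bar> < 1" using pj pk by (simp add: r_def abs_divide)
    then show ?thesis by (simp add: abs_square_less_1)
  qed
  have cm: "cmod m ^ 2 = 4 * cmod a ^ 2 * r^2"
    by (simp add: m norm_mult power_mult_distrib)
  have "cmod a ^ 2 * r^2 \<le> cmod a ^ 2" using r1 by (simp add: mult_left_le)
  moreover have "cmod a ^ 2 * r^2 = cmod a ^ 2 \<longleftrightarrow> a = 0"
  proof
    assume "cmod a ^ 2 * r\<^sup>2 = cmod a ^ 2"
    then have "cmod a ^ 2 * (1 - r^2) = 0" by (simp add: algebra_simps)
    then show "a = 0" using r1 by simp
  qed simp
  ultimately show ?thesis using cm by auto
qed

lemma scal_diag:
  fixes a m :: complex and p :: real
  assumes p: "p > 0"
    and h: "a * of_real p + of_real p * cnj a = (1/2) *\<^sub>R (of_real p * m + m * of_real p)"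
  shows "cmod m ^ 2 \<le> 4 * cmod a ^ 2 \<and> (cmod m ^ 2 = 4 * cmod a ^ 2 \<longleftrightarrow> Im a = 0)"
proof -
  have h2: "2 * (a * of_real p + of_real p * cnj a) = 2 * ((1/2) *\<^sub>R (of_real p * m + m * of_real p))"
    using h by simp
  have "2 * (of_real p * (a + cnj a)) = 2 * (of_real p * m)"
    using h2 unfolding scaleR_conv_of_real by (simp add: algebra_simps)
  then have "of_real p * (a + cnj a) = of_real p * m" by simp
  then have "m = a + cnj a" using p by simp
  then have m: "m = of_real (2 * Re a)" by (simp add: complex_add_cnj)
  have "cmod m ^ 2 = 4 * Re a ^ 2" by (simp add: m power_mult_distrib)
  moreover have "cmod a ^ 2 = Re a ^ 2 + Im a ^ 2" by (simp add: cmod_power2)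
  ultimately show ?thesis by auto
qed


lemma mm_scaleR_left: "(c *\<^sub>R A) ** B = c *\<^sub>R (A ** (B::'a::real_algebra_1^'p^'n))"
  by (simp add: matrix_matrix_mult_def vec_eq_iff scaleR_sum_right)

lemma mm_scaleR_right: "A ** (c *\<^sub>R B) = c *\<^sub>R (A ** (B::'a::real_algebra_1^'p^'n))"
  by (simp add: matrix_matrix_mult_def vec_eq_iff scaleR_sum_right)

lemma mm_rdistrib: "(A + B) ** C = A ** C + B ** (C::'a::semiring_1^'p^'n)"
  by (simp add: matrix_matrix_mult_def vec_eq_iff sum.distrib distrib_right)

lemma dsum_eq:
  fixes h c :: "'a::finite \<Rightarrow> 'b::finite \<Rightarrow> real"
  assumes le: "\<And>j k. h j k \<le> c j k"
  shows "(\<Sum>j\<in>UNIV. \<Sum>k\<in>UNIV. h j k) = (\<Sum>j\<in>UNIV. \<Sum>k\<in>UNIV. c j k) \<longleftrightarrow> (\<forall>j k. h j k = c j k)"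
proof -
  have d: "(\<Sum>j\<in>UNIV. \<Sum>k\<in>UNIV. c j k) - (\<Sum>j\<in>UNIV. \<Sum>k\<in>UNIV. h j k)
      = (\<Sum>j\<in>UNIV. \<Sum>k\<in>UNIV. c j k - h j k)"
    by (simp only: sum_subtractf)
  have inner: "(\<Sum>k\<in>UNIV. c j k - h j k) = 0 \<longleftrightarrow> (\<forall>k\<in>UNIV. c j k - h j k = 0)" for j
    by (rule sum_nonneg_eq_0_iff) (auto simp: le)
  have nn: "\<forall>j\<in>UNIV. 0 \<le> (\<Sum>k\<in>UNIV. c j k - h j k)"
    using le by (auto intro!: sum_nonneg)
  have outer: "(\<Sum>j\<in>UNIV. \<Sum>k\<in>UNIV. c j k - h j k) = 0 \<longleftrightarrow> (\<forall>j\<in>UNIV. (\<Sum>k\<in>UNIV. c j k - h j k) = 0)"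
    by (rule sum_nonneg_eq_0_iff) (use nn in auto)
  show ?thesis
    unfolding eq_iff_diff_eq_0[of "\<Sum>j\<in>UNIV. \<Sum>k\<in>UNIV. h j k"]
    using d outer inner by (smt (verit, best) UNIV_I)
qed


lemma core:
  fixes V V' L :: "complex^'n::finite^'n" and p :: "'n \<Rightarrow> real"
  assumes pos: "\<forall>j. p j > 0"
    and P: "cadj V ** V = diagm (\<lambda>k. of_real (p k))"
    and herm: "hermitian L"
    and sld: "V' ** cadj V + V ** cadj V' = (1/2) *\<^sub>R (V ** cadj V ** L + L ** (V ** cadj V))"
    and off: "\<forall>j k. j \<noteq> k \<longrightarrow> (cadj V' ** V + cadj V ** V') $ j $ k = 0"
  shows "trace (V ** cadj V ** L ** L) = 4 * trace (cadj V' ** V') \<longleftrightarrow>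
         (\<forall>j k. (j \<noteq> k \<longrightarrow> (cadj V ** V') $ j $ k = 0) \<and> Im ((cadj V ** V') $ k $ k) = 0)"
proof -
  define A where "A = cadj V ** V'"
  define M where "M = cadj V ** L ** V"
  define D where "D = diagm (\<lambda>k. of_real (1 / p k))"
  define Pm where "Pm = diagm (\<lambda>k. of_real (p k) :: complex)"
  have "D ** cadj V ** V = mat 1"
  proof -
    have "D ** cadj V ** V = D ** Pm" using P by (simp add: Pm_def matrix_mul_assoc[symmetric])
    also have "\<dots> = mat 1"
      unfolding D_def Pm_def using pos by (simp add: vec_eq_iff diagm_left mat_def) (simp add: diagm_def, metis less_irrefl)
    finally show ?thesis .
  qed
  then have inv: "V ** (D ** cadj V) = mat 1"
    using matrix_left_right_inverse[of "D ** cadj V" V] by simp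
  have Mh: "M $ k $ j = cnj (M $ j $ k)" for j k
  proof -
    have "cadj M = M" using herm unfolding M_def hermitian_def
      by (simp add: cadj_mult matrix_mul_assoc)
    then show ?thesis by (metis cadj_nth complex_cnj_cnj)
  qed
  have H1: "trace (V ** cadj V ** L ** L) = trace (M ** D ** M)"
  proof -
    have "trace (V ** cadj V ** L ** L) = trace (V ** (cadj V ** L ** L))"
      by (simp add: matrix_mul_assoc)
    also have "\<dots> = trace (cadj V ** L ** L ** V)" by (rule trace_mul_sym)
    also have "cadj V ** L ** L ** V = cadj V ** L ** mat 1 ** L ** V" by simp
    also have "\<dots> = cadj V ** L ** (V ** (D ** cadj V)) ** L ** V" by (simp only: inv)
    also have "\<dots> = M ** D ** M" by (simp add: M_def matrix_mul_assoc)
    finally show ?thesis .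
  qed
  have H2: "trace (M ** D ** M) = of_real (\<Sum>j\<in>UNIV. \<Sum>k\<in>UNIV. cmod (M $ k $ j) ^ 2 / p k)"
  proof -
    have "trace (M ** D ** M) = (\<Sum>j\<in>UNIV. \<Sum>k\<in>UNIV. M $ j $ k * of_real (1 / p k) * M $ k $ j)"
      by (simp add: trace_mm diagm_right D_def)
    also have "\<dots> = (\<Sum>j\<in>UNIV. \<Sum>k\<in>UNIV. of_real (cmod (M $ k $ j) ^ 2 / p k))"
    proof (intro sum.cong refl)
      fix j k
      show "M $ j $ k * of_real (1 / p k) * M $ k $ j = of_real (cmod (M $ k $ j) ^ 2 / p k)"
      proof -
        have e: "M $ j $ k * M $ k $ j = of_real (cmod (M $ k $ j) ^ 2)"
          using Mh[of k j] complex_norm_square[of "M $ k $ j"] by (simp add: mult.commute)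
        have "M $ j $ k * of_real (1 / p k) * M $ k $ j = (M $ j $ k * M $ k $ j) * of_real (1 / p k)"
          by (simp only: mult_ac)
        also have "\<dots> = of_real (cmod (M $ k $ j) ^ 2) * of_real (1 / p k)" by (simp only: e)
        also have "\<dots> = of_real (cmod (M $ k $ j) ^ 2 / p k)" by (simp only: of_real_mult[symmetric]) simp
        finally show ?thesis .
      qed
    qed
    finally show ?thesis by simp
  qed
  have C1: "trace (cadj V' ** V') = of_real (\<Sum>j\<in>UNIV. \<Sum>k\<in>UNIV. cmod (A $ k $ j) ^ 2 / p k)"
  proof -
    have "cadj V' ** V' = cadj V' ** mat 1 ** V'" by simp
    also have "\<dots> = cadj V' ** (V ** (D ** cadj V)) ** V'" by (simp only: inv)
    also have "\<dots> = cadj A ** D ** A" by (simp add: A_def cadj_mult matrix_mul_assoc)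
    finally have "trace (cadj V' ** V') = trace (cadj A ** D ** A)" by simp
    also have "\<dots> = (\<Sum>j\<in>UNIV. \<Sum>k\<in>UNIV. cnj (A $ k $ j) * of_real (1 / p k) * A $ k $ j)"
      by (simp add: trace_mm diagm_right D_def)
    also have "\<dots> = (\<Sum>j\<in>UNIV. \<Sum>k\<in>UNIV. of_real (cmod (A $ k $ j) ^ 2 / p k))"
    proof (intro sum.cong refl)
      fix j k
      show "cnj (A $ k $ j) * of_real (1 / p k) * A $ k $ j = of_real (cmod (A $ k $ j) ^ 2 / p k)"
      proof -
        have e: "cnj (A $ k $ j) * A $ k $ j = of_real (cmod (A $ k $ j) ^ 2)"
          using complex_norm_square[of "A $ k $ j"] by (simp add: mult.commute)
        have "cnj (A $ k $ j) * of_real (1 / p k) * A $ k $ j = (cnj (A $ k $ j) * A $ k $ j) * of_real (1 / p k)"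
          by (simp only: mult_ac)
        also have "\<dots> = of_real (cmod (A $ k $ j) ^ 2) * of_real (1 / p k)" by (simp only: e)
        also have "\<dots> = of_real (cmod (A $ k $ j) ^ 2 / p k)" by (simp only: of_real_mult[symmetric]) simp
        finally show ?thesis .
      qed
    qed
    finally show ?thesis by simp
  qed
  have S: "A ** Pm + Pm ** cadj A = (1/2) *\<^sub>R (Pm ** M + M ** Pm)"
  proof -
    have "cadj V ** (V' ** cadj V + V ** cadj V') ** V
        = cadj V ** ((1/2) *\<^sub>R (V ** cadj V ** L + L ** (V ** cadj V))) ** V"
      using sld by simp
    then show ?thesis
      unfolding A_def M_def Pm_def P[symmetric]
      by (simp add: cadj_mult matrix_add_ldistrib mm_rdistrib mm_scaleR_left mm_scaleR_right matrix_mul_assoc)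
  qed
  have Sent: "A $ k $ j * of_real (p j) + of_real (p k) * cnj (A $ j $ k)
      = (1/2) *\<^sub>R (of_real (p k) * M $ k $ j + M $ k $ j * of_real (p j))" for j k
  proof -
    have "(A ** Pm + Pm ** cadj A) $ k $ j = ((1/2) *\<^sub>R (Pm ** M + M ** Pm)) $ k $ j"
      using S by simp
    then show ?thesis by (simp add: Pm_def diagm_right diagm_left)
  qed
  have offA: "cnj (A $ j $ k) = - A $ k $ j" if "k \<noteq> j" for j k
  proof -
    have "(cadj V' ** V + cadj V ** V') $ k $ j = 0" using off that by blast
    moreover have "(cadj V' ** V) $ k $ j = cnj (A $ j $ k)"
      unfolding A_def by (simp add: mm_nth mult.commute)
    ultimately show ?thesis unfolding A_def by (simp add: eq_neg_iff_add_eq_0 add.commute)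
  qed
  have trm: "cmod (M $ k $ j) ^ 2 / p k \<le> 4 * cmod (A $ k $ j) ^ 2 / p k \<and>
      (cmod (M $ k $ j) ^ 2 / p k = 4 * cmod (A $ k $ j) ^ 2 / p k \<longleftrightarrow>
        (k \<noteq> j \<longrightarrow> A $ k $ j = 0) \<and> (k = j \<longrightarrow> Im (A $ k $ j) = 0))" for j k
  proof -
    have pk: "p k > 0" using pos by blast
    have key: "cmod (M $ k $ j) ^ 2 \<le> 4 * cmod (A $ k $ j) ^ 2 \<and>
      (cmod (M $ k $ j) ^ 2 = 4 * cmod (A $ k $ j) ^ 2 \<longleftrightarrow>
        (k \<noteq> j \<longrightarrow> A $ k $ j = 0) \<and> (k = j \<longrightarrow> Im (A $ k $ j) = 0))"
    proof (cases "k = j")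
      case True
      then show ?thesis using scal_diag[of "p k" "A $ k $ k" "M $ k $ k"] Sent[of k k] pk by simp
    next
      case False
      then show ?thesis using scal_off[of "p k" "p j" "A $ k $ j" "M $ k $ j"] Sent[of k j] offA[OF False] pos
        by simp
    qed
    then show ?thesis using pk by (simp add: divide_right_mono)
  qed
  have "trace (V ** cadj V ** L ** L) = 4 * trace (cadj V' ** V') \<longleftrightarrow>
     (\<Sum>j\<in>UNIV. \<Sum>k\<in>UNIV. cmod (M $ k $ j) ^ 2 / p k) = (\<Sum>j\<in>UNIV. \<Sum>k\<in>UNIV. 4 * cmod (A $ k $ j) ^ 2 / p k)"
  proof -
    have "trace (V ** cadj V ** L ** L) = 4 * trace (cadj V' ** V') \<longleftrightarrow>
      (\<Sum>j\<in>UNIV. \<Sum>k\<in>UNIV. cmod (M $ k $ j) ^ 2 / p k) = 4 * (\<Sum>j\<in>UNIV. \<Sum>k\<in>UNIV. cmod (A $ k $ j) ^ 2 / p k)"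
    proof -
      have e4: "4 * trace (cadj V' ** V') = of_real (4 * (\<Sum>j\<in>UNIV. \<Sum>k\<in>UNIV. cmod (A $ k $ j) ^ 2 / p k))"
        unfolding C1 by (simp only: of_real_mult of_real_numeral)
      show ?thesis unfolding H1 H2 e4 by (rule of_real_eq_iff)
    qed
    moreover have "4 * (\<Sum>j\<in>UNIV. \<Sum>k\<in>UNIV. cmod (A $ k $ j) ^ 2 / p k) = (\<Sum>j\<in>UNIV. \<Sum>k\<in>UNIV. 4 * cmod (A $ k $ j) ^ 2 / p k)"
      by (simp add: sum_distrib_left)
    ultimately show ?thesis by simp
  qed
  also have "\<dots> \<longleftrightarrow> (\<forall>j k. cmod (M $ k $ j) ^ 2 / p k = 4 * cmod (A $ k $ j) ^ 2 / p k)"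
    by (rule dsum_eq) (use trm in blast)
  also have "\<dots> \<longleftrightarrow> (\<forall>j k. (k \<noteq> j \<longrightarrow> A $ k $ j = 0) \<and> (k = j \<longrightarrow> Im (A $ k $ j) = 0))"
    using trm by blast
  also have "\<dots> \<longleftrightarrow> (\<forall>j k. (j \<noteq> k \<longrightarrow> A $ j $ k = 0) \<and> Im (A $ k $ k) = 0)"
    by blast
  finally show ?thesis unfolding A_def .
qed



lemma bl_mm_right: "bounded_linear (\<lambda>X::complex^'n::finite^'n. X ** E)"
  unfolding linear_conv_bounded_linear[symmetric]
  by (rule linearI) (simp_all add: mm_rdistrib mm_scaleR_left)

lemma bl_mv: "bounded_linear (\<lambda>X::complex^'n::finite^'n. X *v x)"
  unfolding linear_conv_bounded_linear[symmetric]
  by (rule linearI) (simp_all add: vec_eq_iff matrix_vector_mult_def sum.distrib distrib_right scaleR_sum_right)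

lemma bl_cadj: "bounded_linear (cadj :: complex^'n::finite^'n \<Rightarrow> _)"
  unfolding linear_conv_bounded_linear[symmetric]
  by (rule linearI) (simp_all add: cadj_add cadj_scaleR)

lemma bb_mm: "bounded_bilinear (\<lambda>A B::complex^'n::finite^'n. A ** B)"
  unfolding bilinear_conv_bounded_bilinear[symmetric] bilinear_def
  by (auto intro!: linearI simp: mm_rdistrib mm_scaleR_left matrix_add_ldistrib mm_scaleR_right)

lemma bl_entry: "bounded_linear (\<lambda>X::complex^'n^'m. X $ i $ j)"
  by (rule bounded_linear_compose[OF bounded_linear_vec_nth bounded_linear_vec_nth])

lemma colrel:
  fixes V V' :: "complex^'n::finite^'n" and p :: "'n \<Rightarrow> real"
  assumes pos: "\<forall>j. p j > 0"
    and P: "cadj V ** V = diagm (\<lambda>k. of_real (p k))"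
  shows "(\<forall>j k. (j \<noteq> k \<longrightarrow> (cadj V ** V') $ j $ k = 0) \<and> Im ((cadj V ** V') $ k $ k) = 0)
     \<longleftrightarrow> (\<forall>k i. V' $ i $ k = of_real (Re ((cadj V ** V') $ k $ k) / p k) * V $ i $ k)"
proof -
  define A where "A = cadj V ** V'"
  define D where "D = diagm (\<lambda>k. of_real (1 / p k))"
  have "D ** cadj V ** V = mat 1"
  proof -
    have "D ** cadj V ** V = D ** diagm (\<lambda>k. of_real (p k))" using P by (simp add: matrix_mul_assoc[symmetric])
    also have "\<dots> = mat 1"
      unfolding D_def using pos by (simp add: vec_eq_iff diagm_left mat_def) (simp add: diagm_def, metis less_irrefl)
    finally show ?thesis .
  qed
  then have inv: "V ** (D ** cadj V) = mat 1"
    using matrix_left_right_inverse[of "D ** cadj V" V] by simp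
  have V'eq: "V' = V ** D ** A"
  proof -
    have "V' = mat 1 ** V'" by simp
    also have "\<dots> = V ** (D ** cadj V) ** V'" by (simp only: inv)
    finally show ?thesis by (simp add: A_def matrix_mul_assoc)
  qed
  have Aent: "A $ j $ k = (\<Sum>i\<in>UNIV. cnj (V $ i $ j) * V' $ i $ k)" for j k
    by (simp add: A_def mm_nth)
  have Pent: "(\<Sum>i\<in>UNIV. cnj (V $ i $ j) * V $ i $ k) = (if j = k then of_real (p k) else 0)" for j k
  proof -
    have "(cadj V ** V) $ j $ k = (if j = k then of_real (p k) else 0)" using P by (simp add: diagm_def)
    then show ?thesis by (simp add: mm_nth)
  qed
  show ?thesis
  proof
    assume Q: "\<forall>j k. (j \<noteq> k \<longrightarrow> (cadj V ** V') $ j $ k = 0) \<and> Im ((cadj V ** V') $ k $ k) = 0"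
    show "\<forall>k i. V' $ i $ k = of_real (Re ((cadj V ** V') $ k $ k) / p k) * V $ i $ k"
    proof (intro allI)
      fix k i
      have "V' $ i $ k = (V ** D ** A) $ i $ k" using V'eq by simp
      also have "\<dots> = (\<Sum>j\<in>UNIV. V $ i $ j * of_real (1 / p j) * A $ j $ k)"
        unfolding mm_nth[of "V ** D"] by (simp only: diagm_right D_def)
      also have "\<dots> = (\<Sum>j\<in>UNIV. if j = k then V $ i $ k * of_real (1 / p k) * A $ k $ k else 0)"
        by (rule sum.cong) (use Q in \<open>auto simp: A_def\<close>)
      also have "\<dots> = V $ i $ k * of_real (1 / p k) * A $ k $ k" by simp
      also have "A $ k $ k = of_real (Re (A $ k $ k))"
        using Q by (simp add: A_def complex_eq_iff)
      finally show "V' $ i $ k = of_real (Re ((cadj V ** V') $ k $ k) / p k) * V $ i $ k"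
        by (simp add: A_def)
    qed
  next
    assume R: "\<forall>k i. V' $ i $ k = of_real (Re ((cadj V ** V') $ k $ k) / p k) * V $ i $ k"
    define c :: "'n \<Rightarrow> complex" where "c k = of_real (Re ((cadj V ** V') $ k $ k) / p k)" for k
    have Ac: "A $ j $ k = c k * (if j = k then of_real (p k) else 0)" for j k
    proof -
      have R': "\<forall>k i. V' $ i $ k = c k * V $ i $ k" unfolding c_def by (rule R)
      have "A $ j $ k = (\<Sum>i\<in>UNIV. cnj (V $ i $ j) * (c k * V $ i $ k))"
        unfolding Aent using R' by simp
      also have "\<dots> = c k * (\<Sum>i\<in>UNIV. cnj (V $ i $ j) * V $ i $ k)"
        by (simp add: sum_distrib_left mult_ac)
      finally show ?thesis by (simp add: Pent)
    qed
    then show "\<forall>j k. (j \<noteq> k \<longrightarrow> (cadj V ** V') $ j $ k = 0) \<and> Im ((cadj V ** V') $ k $ k) = 0"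
    proof (intro allI conjI impI)
      fix j k :: 'n
      assume "j \<noteq> k"
      then show "(cadj V ** V') $ j $ k = 0" using Ac[of j k] by (simp add: A_def)
    next
      fix k :: 'n
      have "(cadj V ** V') $ k $ k = c k * of_real (p k)" using Ac[of k k] by (simp add: A_def)
      then show "Im ((cadj V ** V') $ k $ k) = 0" unfolding c_def by (simp only: of_real_mult[symmetric]) (metis Im_complex_of_real)
    qed
  qed
qed



theorem lemma3:
  fixes U U' :: "'n::finite \<Rightarrow> real \<Rightarrow> complex^'n^'n"
    and psi0 :: "complex^'n"
    and p :: "'n \<Rightarrow> real \<Rightarrow> real"
    and L :: "real \<Rightarrow> complex^'n^'n"
  assumes unit: "norm psi0 = 1"
    and kraus: "\<forall>\<theta>. (\<Sum>k\<in>UNIV. cadj (U k \<theta>) ** U k \<theta>) = mat 1"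
    and deriv: "\<forall>k \<theta>. (U k has_vector_derivative U' k \<theta>) (at \<theta>)"
    and canonical: "\<forall>j k \<theta>. trace (U k \<theta> ** outer psi0 psi0 ** cadj (U j \<theta>))
                              = (if j = k then complex_of_real (p k \<theta>) else 0)"
    and pos: "\<forall>j \<theta>. p j \<theta> > 0"
    and SLD: "\<forall>\<theta>. hermitian (L \<theta>) \<and>
               vector_derivative (rho_out U psi0) (at \<theta>)
                 = (1/2) *\<^sub>R (rho_out U psi0 \<theta> ** L \<theta> + L \<theta> ** rho_out U psi0 \<theta>)"
  shows "(\<forall>\<theta>. trace (rho_out U psi0 \<theta> ** L \<theta> ** L \<theta>) = C_Ups U' psi0 \<theta>)
         \<longleftrightarrow> (\<forall>k. \<exists>v. \<forall>\<theta>. wvec U p psi0 k \<theta> = v)"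
proof -
  define u where "u k \<theta> = U k \<theta> *v psi0" for k \<theta>
  define u' where "u' k \<theta> = U' k \<theta> *v psi0" for k \<theta>
  define V where "V \<theta> = (\<chi> i k. u k \<theta> $ i)" for \<theta>
  define V' where "V' \<theta> = (\<chi> i k. u' k \<theta> $ i)" for \<theta>
  define E where "E k = outer psi0 (axis k 1)" for k :: 'n
  have uder: "(u k has_vector_derivative u' k \<theta>) (at \<theta>)" for k \<theta>
    unfolding u_def[abs_def] u'_def
    by (rule bounded_linear.has_vector_derivative[OF bl_mv]) (use deriv in blast)
  have msum: "(\<Sum>k\<in>UNIV. X k ** E k) = (\<chi> i k. (X k *v psi0) $ i)" for X :: "'n \<Rightarrow> complex^'n^'n"
  proof -
    have "(\<Sum>k\<in>UNIV. X k ** E k) $ i $ m = (X m *v psi0) $ i" for i m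
    proof -
      have "(\<Sum>k\<in>UNIV. X k ** E k) $ i $ m = (\<Sum>k\<in>UNIV. if k = m then (X m *v psi0) $ i else 0)"
        unfolding sum_component
        by (rule sum.cong) (auto simp: E_def mm_nth outer_def axis_def matrix_vector_mult_def)
      then show ?thesis by simp
    qed
    then show ?thesis by (simp add: vec_eq_iff)
  qed
  have Vsum: "V = (\<lambda>\<theta>. \<Sum>k\<in>UNIV. U k \<theta> ** E k)"
    by (rule ext) (simp add: msum V_def u_def)
  have V'sum: "V' \<theta> = (\<Sum>k\<in>UNIV. U' k \<theta> ** E k)" for \<theta>
    by (simp add: msum V'_def u'_def)
  have Vder: "(V has_vector_derivative V' \<theta>) (at \<theta>)" for \<theta>
    unfolding Vsum V'sum
    by (rule has_vector_derivative_sum, rule bounded_linear.has_vector_derivative[OF bl_mm_right])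
       (use deriv in blast)
  have rho: "rho_out U psi0 \<theta> = V \<theta> ** cadj (V \<theta>)" for \<theta>
  proof -
    have "rho_out U psi0 \<theta> = (\<Sum>k\<in>UNIV. outer (u k \<theta>) (u k \<theta>))"
      by (simp add: rho_out_def channel_out_def outer_left outer_right u_def)
    then show ?thesis
      by (simp add: vec_eq_iff mm_nth outer_def V_def)
  qed
  have Ptr: "cadj (V \<theta>) ** V \<theta> = diagm (\<lambda>k. of_real (p k \<theta>))" for \<theta>
  proof -
    have "(cadj (V \<theta>) ** V \<theta>) $ j $ k = (if j = k then of_real (p k \<theta>) else 0)" for j k
    proof -
      have "trace (U k \<theta> ** outer psi0 psi0 ** cadj (U j \<theta>)) = (\<Sum>i\<in>UNIV. u k \<theta> $ i * cnj (u j \<theta> $ i))"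
        by (simp only: outer_left outer_right) (simp add: trace_def outer_def u_def)
      then show ?thesis using canonical by (simp add: mm_nth V_def mult.commute)
    qed
    then show ?thesis by (simp add: vec_eq_iff diagm_def)
  qed
  have Cu: "C_Ups U' psi0 \<theta> = 4 * trace (cadj (V' \<theta>) ** V' \<theta>)" for \<theta>
    unfolding C_Ups_def by (simp only: outer_left outer_right)
      (simp add: trace_def outer_def u'_def V'_def mm_nth mult.commute)
  have cadjder: "((\<lambda>t. cadj (V t)) has_vector_derivative cadj (V' \<theta>)) (at \<theta>)" for \<theta>
    by (rule bounded_linear.has_vector_derivative[OF bl_cadj Vder])
  have rhoder: "(rho_out U psi0 has_vector_derivative (V' \<theta> ** cadj (V \<theta>) + V \<theta> ** cadj (V' \<theta>))) (at \<theta>)" for \<theta>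
  proof -
    have "((\<lambda>t. V t ** cadj (V t)) has_vector_derivative (V \<theta> ** cadj (V' \<theta>) + V' \<theta> ** cadj (V \<theta>))) (at \<theta>)"
      by (rule bounded_bilinear.has_vector_derivative[OF bb_mm Vder cadjder])
    then show ?thesis by (simp add: rho[abs_def] add.commute)
  qed
  have sld: "V' \<theta> ** cadj (V \<theta>) + V \<theta> ** cadj (V' \<theta>)
      = (1/2) *\<^sub>R (V \<theta> ** cadj (V \<theta>) ** L \<theta> + L \<theta> ** (V \<theta> ** cadj (V \<theta>)))" for \<theta>
    using SLD vector_derivative_at[OF rhoder[of \<theta>]] by (simp add: rho)
  have Pder: "((\<lambda>t. cadj (V t) ** V t) has_vector_derivative (cadj (V' \<theta>) ** V \<theta> + cadj (V \<theta>) ** V' \<theta>)) (at \<theta>)" for \<theta>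
    using bounded_bilinear.has_vector_derivative[OF bb_mm cadjder Vder, of \<theta>] by (simp add: add.commute)
  have off: "\<forall>j k. j \<noteq> k \<longrightarrow> (cadj (V' \<theta>) ** V \<theta> + cadj (V \<theta>) ** V' \<theta>) $ j $ k = 0" for \<theta>
  proof (intro allI impI)
    fix j k :: 'n assume jk: "j \<noteq> k"
    have d1: "((\<lambda>t. (cadj (V t) ** V t) $ j $ k) has_vector_derivative (cadj (V' \<theta>) ** V \<theta> + cadj (V \<theta>) ** V' \<theta>) $ j $ k) (at \<theta>)"
      by (rule bounded_linear.has_vector_derivative[OF bl_entry Pder])
    have "(\<lambda>t. (cadj (V t) ** V t) $ j $ k) = (\<lambda>t. 0)"
      using jk by (simp add: Ptr diagm_def)
    then have d2: "((\<lambda>t. (cadj (V t) ** V t) $ j $ k) has_vector_derivative 0) (at \<theta>)"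
      by (simp add: has_vector_derivative_const)
    show "(cadj (V' \<theta>) ** V \<theta> + cadj (V \<theta>) ** V' \<theta>) $ j $ k = 0"
      by (rule vector_derivative_unique_at[OF d1 d2])
  qed
  have Hcore: "trace (rho_out U psi0 \<theta> ** L \<theta> ** L \<theta>) = C_Ups U' psi0 \<theta> \<longleftrightarrow>
      (\<forall>k i. V' \<theta> $ i $ k = of_real (Re ((cadj (V \<theta>) ** V' \<theta>) $ k $ k) / p k \<theta>) * V \<theta> $ i $ k)" for \<theta>
  proof -
    have pos1: "\<forall>j. p j \<theta> > 0" using pos by blast
    have h: "hermitian (L \<theta>)" using SLD by blast
    show ?thesis
      unfolding rho Cu
      using core[OF pos1 Ptr h sld off] colrel[OF pos1 Ptr, of "V' \<theta>"] by (simp only:)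
  qed
  define a where "a k \<theta> = Re ((cadj (V \<theta>) ** V' \<theta>) $ k $ k)" for k \<theta>
  have pder: "(p k has_real_derivative 2 * a k \<theta>) (at \<theta>)" for k \<theta>
  proof -
    have bl: "bounded_linear (\<lambda>X::complex^'n^'n. Re (X $ k $ k))"
      by (rule bounded_linear_compose[OF bounded_linear_Re bl_entry])
    have "((\<lambda>t. Re ((cadj (V t) ** V t) $ k $ k)) has_vector_derivative
        Re ((cadj (V' \<theta>) ** V \<theta> + cadj (V \<theta>) ** V' \<theta>) $ k $ k)) (at \<theta>)"
      by (rule bounded_linear.has_vector_derivative[OF bl Pder])
    moreover have "(\<lambda>t. Re ((cadj (V t) ** V t) $ k $ k)) = p k"
      by (rule ext) (simp add: Ptr diagm_def)
    moreover have "(cadj (V' \<theta>) ** V \<theta>) $ k $ k = cnj ((cadj (V \<theta>) ** V' \<theta>) $ k $ k)"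
      by (simp add: mm_nth mult.commute)
    ultimately show ?thesis
      by (simp add: has_real_derivative_iff_has_vector_derivative a_def)
  qed
  have isq: "((\<lambda>t. 1 / sqrt (p k t)) has_real_derivative (- a k \<theta> / (p k \<theta> * sqrt (p k \<theta>)))) (at \<theta>)" for k \<theta>
  proof -
    have pp: "p k \<theta> > 0" using pos by blast
    have s: "((\<lambda>t. sqrt (p k t)) has_real_derivative (inverse (sqrt (p k \<theta>)) / 2 * (2 * a k \<theta>))) (at \<theta>)"
      by (rule DERIV_chain2[OF DERIV_real_sqrt[OF pp] pder])
    have D1: "((\<lambda>t. inverse (sqrt (p k t))) has_real_derivative
        (- ((inverse (sqrt (p k \<theta>)) / 2 * (2 * a k \<theta>)) * inverse (sqrt (p k \<theta>) ^ Suc (Suc 0))))) (at \<theta>)"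
      by (rule DERIV_inverse_fun[OF s]) (use pp in simp)
    have eqv: "- ((inverse (sqrt (p k \<theta>)) / 2 * (2 * a k \<theta>)) * inverse (sqrt (p k \<theta>) ^ Suc (Suc 0)))
        = - a k \<theta> / (p k \<theta> * sqrt (p k \<theta>))"
      using pp by (simp add: field_simps power2_eq_square)
    have eqf: "(\<lambda>t. 1 / sqrt (p k t)) = (\<lambda>t. inverse (sqrt (p k t)))"
      by (simp add: inverse_eq_divide)
    show ?thesis using D1 unfolding eqf eqv .
  qed
  define W' where "W' k \<theta> = (1 / sqrt (p k \<theta>)) *\<^sub>R u' k \<theta> + (- a k \<theta> / (p k \<theta> * sqrt (p k \<theta>))) *\<^sub>R u k \<theta>" for k \<theta>
  have wder: "(wvec U p psi0 k has_vector_derivative W' k \<theta>) (at \<theta>)" for k \<theta>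
  proof -
    have "wvec U p psi0 k = (\<lambda>t. (1 / sqrt (p k t)) *\<^sub>R u k t)"
      by (rule ext) (simp add: wvec_def u_def)
    then show ?thesis unfolding W'_def
      using has_vector_derivative_scaleR[OF isq uder] by simp
  qed
  have wzero: "W' k \<theta> = 0 \<longleftrightarrow> (\<forall>i. V' \<theta> $ i $ k = of_real (a k \<theta> / p k \<theta>) * V \<theta> $ i $ k)" for k \<theta>
  proof -
    have pp: "p k \<theta> > 0" using pos by blast
    have "W' k \<theta> = (1 / sqrt (p k \<theta>)) *\<^sub>R (u' k \<theta> - (a k \<theta> / p k \<theta>) *\<^sub>R u k \<theta>)"
      unfolding W'_def using pp by (simp add: scaleR_diff_right field_simps)
    then have "W' k \<theta> = 0 \<longleftrightarrow> u' k \<theta> = (a k \<theta> / p k \<theta>) *\<^sub>R u k \<theta>"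
      using pp by simp
    also have "\<dots> \<longleftrightarrow> (\<forall>i. V' \<theta> $ i $ k = of_real (a k \<theta> / p k \<theta>) * V \<theta> $ i $ k)"
      by (simp add: vec_eq_iff V_def V'_def) (simp add: scaleR_conv_of_real)
    finally show ?thesis .
  qed
  have step1: "(\<forall>\<theta>. trace (rho_out U psi0 \<theta> ** L \<theta> ** L \<theta>) = C_Ups U' psi0 \<theta>)
      \<longleftrightarrow> (\<forall>k \<theta>. W' k \<theta> = 0)"
    using Hcore wzero unfolding a_def by blast
  have step2: "(\<forall>\<theta>. W' k \<theta> = 0) \<longleftrightarrow> (\<exists>v. \<forall>\<theta>. wvec U p psi0 k \<theta> = v)" for k
  proof
    assume z: "\<forall>\<theta>. W' k \<theta> = 0"
    obtain c where "\<And>x. x \<in> UNIV \<Longrightarrow> wvec U p psi0 k x = c"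
    proof (rule has_vector_derivative_zero_constant[of UNIV "wvec U p psi0 k"])
      fix x :: real
      show "(wvec U p psi0 k has_vector_derivative 0) (at x within UNIV)"
        using wder[of k x] z by simp
    qed auto
    then show "\<exists>v. \<forall>\<theta>. wvec U p psi0 k \<theta> = v" by blast
  next
    assume "\<exists>v. \<forall>\<theta>. wvec U p psi0 k \<theta> = v"
    then obtain v where v: "\<forall>\<theta>. wvec U p psi0 k \<theta> = v" by blast
    then have e: "wvec U p psi0 k = (\<lambda>_. v)" by (simp add: fun_eq_iff)
    show "\<forall>\<theta>. W' k \<theta> = 0"
    proof
      fix \<theta>
      have "((\<lambda>_. v) has_vector_derivative 0) (at \<theta>)" by (rule has_vector_derivative_const)
      then show "W' k \<theta> = 0"
        using vector_derivative_unique_at[OF wder[of k \<theta>]] e by simp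
    qed
  qed
  show ?thesis using step1 step2 by blast
qed


end
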